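(* Consider ${\sf BubbleRank}$ (defined below) run with parameter $\delta\in(0,1)$ in a stochastic click bandit satisfying A1–A5 with $\alpha(1)>\dots>\alpha(K)>0$, and let $$\mathbf{P}_t=\{(i,j)\in[K]^2: i<j,\ |\bar{\mathbf{R}}_t^{-1}(i)-\bar{\mathbf{R}}_t^{-1}(j)|=1,\ \mathbf{s}_{t-1}(i,j)\le2\sqrt{\mathbf{n}_{t-1}(i,j)\log(1/\delta)}\}.$$ Then on the event $\mathcal{E}$ defined below, for every $t\in[n]$, $$\sum_{k=1}^K\big(\chi(\mathcal{R}^*,k)\alpha(k)-\chi(\mathbf{R}_t,k)\alpha(\mathbf{R}_t(k))\big)\le3K\chi_{\max}\sum_{i=1}^K\sum_{j=i+1}^K\mathbb{1}\{(i,j)\in\mathbf{P}_t\}(\alpha(i)-\alpha(j)).$$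
   Context: Model. Items $[K]$; a list $\mathcal{R}$ orders all $K$ items, $\mathcal{R}(k)$ is the item at position $k$, $\mathcal{R}^{-1}(i)$ the position of $i$; $\Pi_K$ the set of lists. At time $t$, $(\mathbf{A}_t,\mathbf{X}_t)\in\{0,1\}^K\times\{0,1\}^{\Pi_K\times[K]}$ is drawn i.i.d. from a product distribution; the learner displays $\mathbf{R}_t$ and observes $\mathbf{c}_t(k)=\mathbf{X}_t(\mathbf{R}_t,k)\mathbf{A}_t(\mathbf{R}_t(k))$. $\alpha=\mathbb{E}[\mathbf{A}_t]$, $\chi=\mathbb{E}[\mathbf{X}_t]$, $r(\mathcal{R},\alpha,\chi)=\sum_k\chi(\mathcal{R},k)\alpha(\mathcal{R}(k))$, $\mathcal{R}^*=(1,\dots,K)$, $\chi_{\max}=\chi(\mathcal{R}^*,1)$. Assumptions for all lists $\mathcal{R},\mathcal{R}'$ and positions $k<\ell$: (A1) $r(\mathcal{R},\alpha,\chi)\le r(\mathcal{R}^*,\alpha,\chi)$; (A2) $\{\mathcal{R}(1..k-1)\}=\{\mathcal{R}'(1..k-1)\}\Rightarrow\chi(\mathcal{R},k)=\chi(\mathcal{R}',k)$; (A3) $\chi(\mathcal{R},k)\ge\chi(\mathcal{R},\ell)$; (A4) if $\mathcal{R},\mathcal{R}'$ differ only by exchanging items at positions $k,\ell$, then $\alpha(\mathcal{R}(k))\le\alpha(\mathcal{R}(\ell))\iff\chi(\mathcal{R},\ell)\ge\chi(\mathcal{R}',\ell)$; (A5) $\chi(\mathcal{R},k)\ge\chi(\mathcal{R}^*,k)$.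 Algorithm ${\sf BubbleRank}$ (initial list $\mathcal{R}_0$, horizon $n$): $\mathbf{s}_0\equiv\mathbf{n}_0\equiv0$, $\bar{\mathbf{R}}_1=\mathcal{R}_0$. For $t=1,\dots,n$: $h=t\bmod2$, $\mathbf{R}_t\leftarrow\bar{\mathbf{R}}_t$; for $k=1,\dots,\lfloor(K-h)/2\rfloor$ with $i=\mathbf{R}_t(2k-1+h)$, $j=\mathbf{R}_t(2k+h)$: if $\mathbf{s}_{t-1}(i,j)\le2\sqrt{\mathbf{n}_{t-1}(i,j)\log(1/\delta)}$ exchange these two positions with probability $1/2$. Display $\mathbf{R}_t$, observe $\mathbf{c}_t$. $\mathbf{s}_t=\mathbf{s}_{t-1}$, $\mathbf{n}_t=\mathbf{n}_{t-1}$; for each such $k$ with $i=\mathbf{R}_t(2k-1+h)$, $j=\mathbf{R}_t(2k+h)$: if $|\mathbf{c}_t(2k-1+h)-\mathbf{c}_t(2k+h)|=1$, add $\mathbf{c}_t(2k-1+h)-\mathbf{c}_t(2k+h)$ to $\mathbf{s}_t(i,j)$, its negative to $\mathbf{s}_t(j,i)$, and $1$ to $\mathbf{n}_t(i,j),\mathbf{n}_t(j,i)$. Then $\bar{\mathbf{R}}_{t+1}=\bar{\mathbf{R}}_t$; for $k=1,\dots,K-1$ in order with $i=\bar{\mathbf{R}}_{t+1}(k)$, $j=\bar{\mathbf{R}}_{t+1}(k+1)$: if $\mathbf{s}_t(j,i)>2\sqrt{\mathbf{n}_t(j,i)\log(1/\delta)}$ exchange positions $k,k+1$ of $\bar{\mathbf{R}}_{t+1}$.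 Event $\mathcal{E}=\bigcap_{t\in[n]}(\mathcal{E}_{t,1}\cap\mathcal{E}_{t,2})$, where $\mathcal{E}_{t,1}$: for all $i<j$, $\frac{\alpha(i)-\alpha(j)}{\alpha(i)+\alpha(j)}\mathbf{n}_t(i,j)-2\sqrt{\mathbf{n}_t(i,j)\log(1/\delta)}\le\mathbf{s}_t(i,j)$; and $\mathcal{E}_{t,2}$: for all $i>j$, $\mathbf{s}_t(i,j)\le2\sqrt{\mathbf{n}_t(i,j)\log(1/\delta)}$. *)

theory Defs
  imports Complex_Main
begin

(* Conventions: items and positions are 0-indexed: items {0..<K}, positions {0..<K}.
   A list (ranking) is a nat list that is a permutation of [0..<K];
   R ! k is the item at position k, index R i is the position of item i. *)

definition lists_K :: "nat \<Rightarrow> nat list set" where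
  "lists_K K = {R. distinct R \<and> set R = {0..<K}}"

definition opt_list :: "nat \<Rightarrow> nat list" where
  "opt_list K = [0..<K]"

definition reward :: "nat \<Rightarrow> nat list \<Rightarrow> (nat \<Rightarrow> real) \<Rightarrow> (nat list \<Rightarrow> nat \<Rightarrow> real) \<Rightarrow> real" where
  "reward K R \<alpha> \<chi> = (\<Sum>k<K. \<chi> R k * \<alpha> (R ! k))"

definition swap_list :: "nat list \<Rightarrow> nat \<Rightarrow> nat \<Rightarrow> nat list" where
  "swap_list R k l = R[k := R ! l, l := R ! k]"

definition conf :: "real \<Rightarrow> nat \<Rightarrow> real" where
  "conf \<delta> m = 2 * sqrt (real m * ln (1 / \<delta>))"

(* 0-indexed first positions of the compared pairs at parity h:
   paper positions 2k-1+h, 2k+h for k = 1..floor((K-h)/2) *)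
definition pair_positions :: "nat \<Rightarrow> nat \<Rightarrow> nat list" where
  "pair_positions K h = map (\<lambda>q. 2 * q + h) [0..<(K - h) div 2]"

(* Construction of the displayed list R_t from barR_t; coin p = outcome of the fair coin
   (swap with probability 1/2) for the pair starting at position p. *)
definition display_list ::
  "real \<Rightarrow> nat \<Rightarrow> nat \<Rightarrow> (nat \<Rightarrow> nat \<Rightarrow> int) \<Rightarrow> (nat \<Rightarrow> nat \<Rightarrow> nat) \<Rightarrow> (nat \<Rightarrow> bool)
    \<Rightarrow> nat list \<Rightarrow> nat list" where
  "display_list \<delta> K h s n coin barR =
     foldl (\<lambda>R p. if real_of_int (s (R ! p) (R ! (p + 1))) \<le> conf \<delta> (n (R ! p) (R ! (p + 1))) \<and> coin p
                  then swap_list R p (p + 1) else R) barR (pair_positions K h)"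

definition update_stats ::
  "nat \<Rightarrow> nat \<Rightarrow> nat list \<Rightarrow> (nat \<Rightarrow> int) \<Rightarrow> (nat \<Rightarrow> nat \<Rightarrow> int) \<times> (nat \<Rightarrow> nat \<Rightarrow> nat)
    \<Rightarrow> (nat \<Rightarrow> nat \<Rightarrow> int) \<times> (nat \<Rightarrow> nat \<Rightarrow> nat)" where
  "update_stats K h R c sn0 =
     foldl (\<lambda>(s, n) p.
        let i = R ! p; j = R ! (p + 1); d = c p - c (p + 1) in
        if \<bar>d\<bar> = 1 then
          ((\<lambda>a b. if a = i \<and> b = j then s a b + d else if a = j \<and> b = i then s a b - d else s a b),
           (\<lambda>a b. if (a = i \<and> b = j) \<or> (a = j \<and> b = i) then n a b + 1 else n a b))
        else (s, n)) sn0 (pair_positions K h)"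

definition update_list ::
  "real \<Rightarrow> nat \<Rightarrow> (nat \<Rightarrow> nat \<Rightarrow> int) \<Rightarrow> (nat \<Rightarrow> nat \<Rightarrow> nat) \<Rightarrow> nat list \<Rightarrow> nat list" where
  "update_list \<delta> K s n barR =
     foldl (\<lambda>R p. if real_of_int (s (R ! (p + 1)) (R ! p)) > conf \<delta> (n (R ! (p + 1)) (R ! p))
                  then swap_list R p (p + 1) else R) barR [0..<K - 1]"

(* bubble_state ... t = (s_t, n_t, barR_{t+1}).
   A t i : realization of A_t(i); X t R k : realization of X_t(R,k); coin t p : fair coins at time t. *)
primrec bubble_state ::
  "real \<Rightarrow> nat \<Rightarrow> nat list \<Rightarrow> (nat \<Rightarrow> nat \<Rightarrow> int) \<Rightarrow> (nat \<Rightarrow> nat list \<Rightarrow> nat \<Rightarrow> int)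
    \<Rightarrow> (nat \<Rightarrow> nat \<Rightarrow> bool) \<Rightarrow> nat
    \<Rightarrow> (nat \<Rightarrow> nat \<Rightarrow> int) \<times> (nat \<Rightarrow> nat \<Rightarrow> nat) \<times> nat list" where
  "bubble_state \<delta> K R0 A X coin 0 = ((\<lambda>_ _. 0), (\<lambda>_ _. 0), R0)"
| "bubble_state \<delta> K R0 A X coin (Suc t) =
     (case bubble_state \<delta> K R0 A X coin t of (s, n, barR) \<Rightarrow>
       let h = Suc t mod 2;
           Rt = display_list \<delta> K h s n (coin (Suc t)) barR;
           c = (\<lambda>k. X (Suc t) Rt k * A (Suc t) (Rt ! k));
           (s', n') = update_stats K h Rt c (s, n)
       in (s', n', update_list \<delta> K s' n' barR))"

definition stat_s where "stat_s \<delta> K R0 A X coin t = fst (bubble_state \<delta> K R0 A X coin t)"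
definition stat_n where "stat_n \<delta> K R0 A X coin t = fst (snd (bubble_state \<delta> K R0 A X coin t))"

(* barR_t for t \<ge> 1 *)
definition bar_list where "bar_list \<delta> K R0 A X coin t = snd (snd (bubble_state \<delta> K R0 A X coin (t - 1)))"

(* displayed list R_t for t \<ge> 1 *)
definition shown_list where
  "shown_list \<delta> K R0 A X coin t =
     display_list \<delta> K (t mod 2) (stat_s \<delta> K R0 A X coin (t - 1)) (stat_n \<delta> K R0 A X coin (t - 1))
       (coin t) (bar_list \<delta> K R0 A X coin t)"

definition good_event where
  "good_event \<delta> K R0 A X coin \<alpha> hor \<longleftrightarrow>
     (\<forall>t\<in>{1..hor}.
        (\<forall>i j. i < j \<and> j < K \<longrightarrow>
           (\<alpha> i - \<alpha> j) / (\<alpha> i + \<alpha> j) * real (stat_n \<delta> K R0 A X coin t i j)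
             - conf \<delta> (stat_n \<delta> K R0 A X coin t i j)
           \<le> real_of_int (stat_s \<delta> K R0 A X coin t i j)) \<and>
        (\<forall>i j. j < i \<and> i < K \<longrightarrow>
           real_of_int (stat_s \<delta> K R0 A X coin t i j) \<le> conf \<delta> (stat_n \<delta> K R0 A X coin t i j)))"

definition pos_of :: "nat list \<Rightarrow> nat \<Rightarrow> nat" where
  "pos_of R i = (THE k. k < length R \<and> R ! k = i)"

definition P_set where
  "P_set \<delta> K R0 A X coin t =
     {(i, j). i < j \<and> j < K \<and>
        (let bR = bar_list \<delta> K R0 A X coin t in
          \<bar>int (pos_of bR i) - int (pos_of bR j)\<bar> = 1) \<and>
        real_of_int (stat_s \<delta> K R0 A X coin (t - 1) i j) \<le> conf \<delta> (stat_n \<delta> K R0 A X coin (t - 1) i j)}"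

end

theory Submission
  imports Defs
begin

definition invs :: "nat list \<Rightarrow> (nat \<times> nat) set" where
  "invs B = {(x,y). \<exists>p q. p < q \<and> q < length B \<and> B!p = x \<and> B!q = y \<and> y < x}"

definition badp :: "(nat \<Rightarrow> nat \<Rightarrow> bool) \<Rightarrow> nat list \<Rightarrow> (nat \<times> nat) set" where
  "badp Q B = {(x,y). (x,y) \<in> invs B \<and> Q y x}"

lemma swap_nth:
  "i < length B \<Longrightarrow> j+1 < length B \<Longrightarrow>
   swap_list B j (j+1) ! i = (if i = j then B!(j+1) else if i = j+1 then B!j else B!i)"
  by (simp add: swap_list_def nth_list_update)

lemma swap_length[simp]: "length (swap_list B i j) = length B"
  by (simp add: swap_list_def)

lemma swap_distinct: "i < length B \<Longrightarrow> j < length B \<Longrightarrow> distinct (swap_list B i j) = distinct B"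
  by (simp add: swap_list_def distinct_swap)

lemma swap_set: "i < length B \<Longrightarrow> j < length B \<Longrightarrow> set (swap_list B i j) = set B"
  by (simp add: swap_list_def set_swap)

lemma invs_swap:
  assumes "j+1 < length B" "B!(j+1) < B!j"
  shows "invs (swap_list B j (j+1)) \<subseteq> invs B"
proof
  fix z assume "z \<in> invs (swap_list B j (j+1))"
  then obtain x y p q where z: "z = (x,y)" and pq: "p < q" "q < length B"
    "swap_list B j (j+1) ! p = x" "swap_list B j (j+1) ! q = y" "y < x"
    unfolding invs_def by auto
  have xp: "x = (if p = j then B!(j+1) else if p = j+1 then B!j else B!p)"
    using pq assms swap_nth[of p B j] by simp
  have yq: "y = (if q = j then B!(j+1) else if q = j+1 then B!j else B!q)"
    using pq assms swap_nth[of q B j] by simp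
  show "z \<in> invs B"
  proof (cases "p = j \<and> q = j+1")
    case True
    then show ?thesis using xp yq pq assms by auto
  next
    case False
    define p' where "p' = (if p = j then j+1 else if p = j+1 then j else p)"
    define q' where "q' = (if q = j then j+1 else if q = j+1 then j else q)"
    have "p' < q'" "q' < length B" using False pq assms unfolding p'_def q'_def by auto
    moreover have "B!p' = x" "B!q' = y" using xp yq unfolding p'_def q'_def by auto
    ultimately show ?thesis unfolding invs_def z using pq by blast
  qed
qed


lemma pass_fold:
  fixes Q :: "nat \<Rightarrow> nat \<Rightarrow> bool" and B :: "nat list"
  defines "F \<equiv> (\<lambda>R p. if Q (R!(p+1)) (R!p) then swap_list R p (p+1) else R)"
  assumes dist: "distinct B"
    and H: "\<And>u v. u \<in> set B \<Longrightarrow> v \<in> set B \<Longrightarrow> v < u \<Longrightarrow> \<not> Q u v"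
    and D: "\<And>x y x' y'. (x,y)\<in>badp Q B \<Longrightarrow> (x',y')\<in>badp Q B \<Longrightarrow> (x=x' \<or> x=y' \<or> y=x' \<or> y=y') \<Longrightarrow> x=x' \<and> y=y'"
    and A0: "\<And>x y. (x,y)\<in>badp Q B \<Longrightarrow> \<exists>p. p+1 < length B \<and> B!p = x \<and> B!(p+1) = y"
  shows "j \<le> length B - 1 \<Longrightarrow> distinct (foldl F B [0..<j]) \<and> set (foldl F B [0..<j]) = set B
     \<and> length (foldl F B [0..<j]) = length B \<and> invs (foldl F B [0..<j]) \<subseteq> invs B
     \<and> (\<forall>(x,y)\<in>badp Q (foldl F B [0..<j]). \<exists>p\<ge>j. p+1 < length B \<and>
           foldl F B [0..<j] ! p = x \<and> foldl F B [0..<j] ! (p+1) = y)"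
proof (induction j)
  case 0
  then show ?case using dist A0 by auto
next
  case (Suc j)
  define Bj where "Bj = foldl F B [0..<j]"
  have IH: "distinct Bj" "set Bj = set B" "length Bj = length B" "invs Bj \<subseteq> invs B"
     "\<forall>(x,y)\<in>badp Q Bj. \<exists>p\<ge>j. p+1 < length B \<and> Bj ! p = x \<and> Bj ! (p+1) = y"
    using Suc unfolding Bj_def by auto
  have IH5: "\<And>x y. (x,y) \<in> badp Q Bj \<Longrightarrow> \<exists>p\<ge>j. p+1 < length B \<and> Bj ! p = x \<and> Bj ! (p+1) = y"
    using IH(5) by auto
  have jl: "j+1 < length B" using Suc by auto
  have fo: "foldl F B [0..<Suc j] = F Bj j" unfolding Bj_def by simp
  have badsub: "badp Q Bj \<subseteq> badp Q B" using IH(4) unfolding badp_def by auto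
  show ?case
  proof (cases "Q (Bj!(j+1)) (Bj!j)")
    case False
    have "F Bj j = Bj" using False unfolding F_def by simp
    moreover have "\<forall>(x,y)\<in>badp Q Bj. \<exists>p\<ge>Suc j. p+1 < length B \<and> Bj ! p = x \<and> Bj ! (p+1) = y"
    proof (intro ballI, clarify)
      fix x y assume xy: "(x,y) \<in> badp Q Bj"
      then obtain p where p: "p \<ge> j" "p+1 < length B" "Bj!p = x" "Bj!(p+1) = y" using IH5 by blast
      have "Q y x" using xy unfolding badp_def by auto
      then have "p \<noteq> j" using p False by auto
      then show "\<exists>p\<ge>Suc j. p+1 < length B \<and> Bj ! p = x \<and> Bj ! (p+1) = y" using p
        by (intro exI[of _ p]) auto
    qed
    ultimately show ?thesis using fo IH by simp
  next
    case True
    define a where "a = Bj!j"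
    define b where "b = Bj!(j+1)"
    define S where "S = swap_list Bj j (j+1)"
    have FS: "F Bj j = S" using True unfolding F_def S_def by simp
    have ain: "a \<in> set B" "b \<in> set B" using IH(2,3) jl unfolding a_def b_def
      by (metis add_lessD1 nth_mem)+
    have ab: "a \<noteq> b" using IH(1,3) jl unfolding a_def b_def by (simp add: nth_eq_iff_index_eq)
    have "\<not> a < b" using H[OF ain(2) ain(1)] True unfolding a_def b_def by blast
    then have ba: "b < a" using ab by simp
    have Sd: "distinct S" "set S = set B" "length S = length B"
      using IH jl swap_distinct[of j Bj "j+1"] swap_set[of j Bj "j+1"] unfolding S_def by auto
    have Sinv: "invs S \<subseteq> invs Bj" using invs_swap[of j Bj] jl IH(3) ba
      unfolding S_def a_def b_def by simp
    have Snth: "\<And>i. i < length B \<Longrightarrow> S ! i = (if i = j then b else if i = j+1 then a else Bj!i)"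
      using swap_nth[of _ Bj j] jl IH(3) unfolding S_def a_def b_def by simp
    have abbad: "(a,b) \<in> badp Q Bj" unfolding badp_def invs_def
      using True ba jl IH(3) unfolding a_def b_def by auto
    have "\<forall>(x,y)\<in>badp Q S. \<exists>p\<ge>Suc j. p+1 < length B \<and> S ! p = x \<and> S ! (p+1) = y"
    proof (intro ballI, clarify)
      fix x y assume xy: "(x,y) \<in> badp Q S"
      then have xyj: "(x,y) \<in> badp Q Bj" using Sinv unfolding badp_def by auto
      then obtain p where p: "p \<ge> j" "p+1 < length B" "Bj!p = x" "Bj!(p+1) = y" using IH5 by blast
      have "p \<noteq> j"
      proof
        assume "p = j"
        then have "x = a" "y = b" using p unfolding a_def b_def by auto
        then have "(a,b) \<in> invs S" using xy unfolding badp_def by auto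
        then obtain p' q' where pq: "p' < q'" "q' < length S" "S!p' = a" "S!q' = b"
          unfolding invs_def by auto
        have "S!(j+1) = a" "S!j = b" using Snth jl by auto
        then have "p' = j+1" "q' = j" using pq Sd jl by (auto simp: nth_eq_iff_index_eq)
        then show False using pq by simp
      qed
      moreover have "p \<noteq> j+1"
      proof
        assume "p = j+1"
        then have "x = b" using p unfolding b_def by auto
        then have "(b,y) \<in> badp Q B" "(a,b) \<in> badp Q B" using xyj abbad badsub by auto
        then have "a = b" using D by blast
        then show False using ab by simp
      qed
      ultimately have "p \<ge> j+2" using p by simp
      then have "S!p = x" "S!(p+1) = y" using Snth p by auto
      then show "\<exists>p\<ge>Suc j. p+1 < length B \<and> S ! p = x \<and> S ! (p+1) = y" using p \<open>p \<ge> j+2\<close>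
        by (intro exI[of _ p]) auto
    qed
    then show ?thesis using fo FS Sd Sinv IH(4) by auto
  qed
qed


lemma fold_swaps:
  fixes c :: "nat \<Rightarrow> nat \<Rightarrow> bool" and d :: "nat \<Rightarrow> bool"
  defines "F \<equiv> (\<lambda>R p. if c (R!p) (R!(p+1)) \<and> d p then swap_list R p (p+1) else R)"
  assumes "sorted_wrt (\<lambda>a b. a+1 < b) ps" "\<forall>p\<in>set ps. p+1 < length B"
  shows "\<exists>W \<subseteq> set ps. (\<forall>p\<in>W. c (B!p) (B!(p+1))) \<and> length (foldl F B ps) = length B \<and>
     (\<forall>k<length B. foldl F B ps ! k = (if k\<in>W then B!(k+1) else if k>0 \<and> k-1 \<in> W then B!(k-1) else B!k))"
  using assms(2,3)
proof (induction ps rule: rev_induct)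
  case Nil
  then show ?case by (intro exI[of _ "{}"]) auto
next
  case (snoc x xs)
  have sx: "sorted_wrt (\<lambda>a b. a+1 < b) xs" "\<forall>y\<in>set xs. y+1 < x"
    using snoc.prems(1) by (auto simp: sorted_wrt_append)
  obtain W0 where W0: "W0 \<subseteq> set xs" "\<forall>p\<in>W0. c (B!p) (B!(p+1))" "length (foldl F B xs) = length B"
     "\<forall>k<length B. foldl F B xs ! k = (if k\<in>W0 then B!(k+1) else if k>0 \<and> k-1 \<in> W0 then B!(k-1) else B!k)"
    using snoc sx by auto
  define R0 where "R0 = foldl F B xs"
  have xl: "x+1 < length B" using snoc.prems by auto
  have nx: "x \<notin> W0" "x+1 \<notin> W0" "x - 1 \<notin> W0" using W0(1) sx(2) by fastforce+
  have R0x: "R0!x = B!x" "R0!(x+1) = B!(x+1)" using W0(4) xl nx unfolding R0_def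
    by (auto split: if_splits)
  have fo: "foldl F B (xs@[x]) = F R0 x" unfolding R0_def by simp
  show ?case
  proof (cases "c (R0!x) (R0!(x+1)) \<and> d x")
    case True
    have FS: "F R0 x = swap_list R0 x (x+1)" using True unfolding F_def by simp
    show ?thesis
    proof (intro exI[of _ "insert x W0"] conjI allI impI)
      show "insert x W0 \<subseteq> set (xs@[x])" using W0(1) by auto
      show "\<forall>p\<in>insert x W0. c (B!p) (B!(p+1))" using W0(2) True R0x by auto
      show "length (foldl F B (xs@[x])) = length B" using fo FS W0(3) R0_def by simp
      fix k assume k: "k < length B"
      have "foldl F B (xs@[x]) ! k = (if k = x then R0!(x+1) else if k = x+1 then R0!x else R0!k)"
        using fo FS swap_nth[of k R0 x] k xl W0(3) R0_def by simp
      then show "foldl F B (xs@[x]) ! k = (if k\<in>insert x W0 then B!(k+1) else if k>0 \<and> k-1 \<in> insert x W0 then B!(k-1) else B!k)"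
        using R0x W0(4) k nx unfolding R0_def[symmetric] by (auto split: if_splits)
    qed
  next
    case False
    have "F R0 x = R0" using False unfolding F_def by auto
    then show ?thesis using W0 fo R0_def by (intro exI[of _ W0]) auto
  qed
qed

lemma pp_sorted: "sorted_wrt (\<lambda>a b. a+1 < b) (pair_positions K h)"
  unfolding pair_positions_def sorted_wrt_map
  by (rule sorted_wrt_mono_rel[OF _ sorted_wrt_upt]) auto

lemma pp_bound: "p \<in> set (pair_positions K h) \<Longrightarrow> p+1 < K"
  unfolding pair_positions_def by auto


lemma pp_gap: "p \<in> set (pair_positions K h) \<Longrightarrow> q \<in> set (pair_positions K h) \<Longrightarrow> p \<noteq> q \<Longrightarrow> p+1 < q \<or> q+1 < p"
  unfolding pair_positions_def by auto

definition stat_step :: "nat list \<Rightarrow> (nat \<Rightarrow> int) \<Rightarrow> (nat \<Rightarrow> nat \<Rightarrow> int) \<times> (nat \<Rightarrow> nat \<Rightarrow> nat) \<Rightarrow> nat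
   \<Rightarrow> (nat \<Rightarrow> nat \<Rightarrow> int) \<times> (nat \<Rightarrow> nat \<Rightarrow> nat)" where
  "stat_step R c = (\<lambda>(s, n) p.
        let i = R ! p; j = R ! (p + 1); d = c p - c (p + 1) in
        if \<bar>d\<bar> = 1 then
          ((\<lambda>a b. if a = i \<and> b = j then s a b + d else if a = j \<and> b = i then s a b - d else s a b),
           (\<lambda>a b. if (a = i \<and> b = j) \<or> (a = j \<and> b = i) then n a b + 1 else n a b))
        else (s, n))"

lemma update_stats_alt: "update_stats K h R c sn = foldl (stat_step R c) sn (pair_positions K h)"
  unfolding update_stats_def stat_step_def by (rule refl)

lemma stat_step_unch:
  assumes "\<not>((u = R!p \<and> v = R!(p+1)) \<or> (u = R!(p+1) \<and> v = R!p))"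
  shows "fst (stat_step R c sn p) u v = fst sn u v \<and> snd (stat_step R c sn p) u v = snd sn u v"
proof -
  obtain s n where sn: "sn = (s,n)" by fastforce
  show ?thesis
  proof (cases "\<bar>c p - c (p+1)\<bar> = 1")
    case True
    then show ?thesis using assms unfolding sn stat_step_def Let_def by (simp; blast)
  next
    case False
    then show ?thesis unfolding sn stat_step_def Let_def by simp
  qed
qed

lemma stats_fold:
  "\<forall>p\<in>set ps. \<not>((u = R!p \<and> v = R!(p+1)) \<or> (u = R!(p+1) \<and> v = R!p)) \<Longrightarrow>
   fst (foldl (stat_step R c) sn ps) u v = fst sn u v \<and> snd (foldl (stat_step R c) sn ps) u v = snd sn u v"
proof (induction ps arbitrary: sn)
  case Nil
  then show ?case by simp
next
  case (Cons p ps)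
  have "fst (foldl (stat_step R c) (stat_step R c sn p) ps) u v = fst (stat_step R c sn p) u v \<and>
        snd (foldl (stat_step R c) (stat_step R c sn p) ps) u v = snd (stat_step R c sn p) u v"
    using Cons by simp
  then show ?case using stat_step_unch[of u R p v c sn] Cons.prems by simp
qed

lemma stats_unchanged:
  assumes "\<forall>p\<in>set (pair_positions K h). \<not>((u = R!p \<and> v = R!(p+1)) \<or> (u = R!(p+1) \<and> v = R!p))"
    and "update_stats K h R c (s0, n0) = (s1, n1)"
  shows "s1 u v = s0 u v \<and> n1 u v = n0 u v"
proof -
  have "fst (foldl (stat_step R c) (s0,n0) (pair_positions K h)) u v = s0 u v \<and>
        snd (foldl (stat_step R c) (s0,n0) (pair_positions K h)) u v = n0 u v"
    using stats_fold[OF assms(1), of c "(s0,n0)"] by simp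
  moreover have "foldl (stat_step R c) (s0,n0) (pair_positions K h) = (s1,n1)"
    using assms(2) unfolding update_stats_alt .
  ultimately show ?thesis by simp
qed

lemma lists_K_props: "B \<in> lists_K K \<Longrightarrow> distinct B \<and> set B = {0..<K} \<and> length B = K"
  unfolding lists_K_def using distinct_card by fastforce

lemma display_char:
  assumes "length B = K"
  shows "\<exists>W \<subseteq> set (pair_positions K h).
     (\<forall>p\<in>W. real_of_int (s (B!p) (B!(p+1))) \<le> conf \<delta> (n (B!p) (B!(p+1)))) \<and>
     length (display_list \<delta> K h s n cn B) = length B \<and>
     (\<forall>k<length B. display_list \<delta> K h s n cn B ! k =
        (if k\<in>W then B!(k+1) else if k>0 \<and> k-1 \<in> W then B!(k-1) else B!k))"
  using fold_swaps[where c = "\<lambda>a b. real_of_int (s a b) \<le> conf \<delta> (n a b)" and d = cn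
      and ps = "pair_positions K h" and B = B, OF pp_sorted] pp_bound assms
  unfolding display_list_def by auto

lemma display_pairs:
  assumes "length B = K"
  shows "\<forall>p\<in>set (pair_positions K h).
    (display_list \<delta> K h s n cn B ! p = B!p \<and> display_list \<delta> K h s n cn B ! (p+1) = B!(p+1)) \<or>
    (display_list \<delta> K h s n cn B ! p = B!(p+1) \<and> display_list \<delta> K h s n cn B ! (p+1) = B!p)"
proof
  fix p assume p: "p \<in> set (pair_positions K h)"
  obtain W where W: "W \<subseteq> set (pair_positions K h)"
     "\<forall>k<length B. display_list \<delta> K h s n cn B ! k =
        (if k\<in>W then B!(k+1) else if k>0 \<and> k-1 \<in> W then B!(k-1) else B!k)"
    using display_char[OF assms, of h s \<delta> n cn] by blast
  have pl: "p+1 < length B" using pp_bound[OF p] assms by simp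
  have n1: "p+1 \<notin> W" using W(1) pp_gap[OF p, of "p+1"] by auto
  have n2: "p > 0 \<Longrightarrow> p-1 \<notin> W" using W(1) pp_gap[OF p, of "p-1"] by force
  show "(display_list \<delta> K h s n cn B ! p = B!p \<and> display_list \<delta> K h s n cn B ! (p+1) = B!(p+1)) \<or>
    (display_list \<delta> K h s n cn B ! p = B!(p+1) \<and> display_list \<delta> K h s n cn B ! (p+1) = B!p)"
    using W(2) pl n1 n2 by (cases "p \<in> W") auto
qed

lemma inv_step:
  fixes s :: "nat \<Rightarrow> nat \<Rightarrow> int" and n :: "nat \<Rightarrow> nat \<Rightarrow> nat"
  assumes B: "B \<in> lists_K K"
    and G: "\<forall>(x,y)\<in>invs B. real_of_int (s y x) \<le> conf \<delta> (n y x)"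
    and us: "update_stats K h (display_list \<delta> K h s n cn B) c (s,n) = (s',n')"
    and E2: "\<And>i j. j < i \<Longrightarrow> i < K \<Longrightarrow> real_of_int (s' i j) \<le> conf \<delta> (n' i j)"
  shows "update_list \<delta> K s' n' B \<in> lists_K K \<and>
     (\<forall>(x,y)\<in>invs (update_list \<delta> K s' n' B). real_of_int (s' y x) \<le> conf \<delta> (n' y x))"
proof -
  have dB: "distinct B" "set B = {0..<K}" "length B = K" using lists_K_props[OF B] by auto
  define Rt where "Rt = display_list \<delta> K h s n cn B"
  define pp where "pp = pair_positions K h"
  define Q where "Q = (\<lambda>u v. real_of_int (s' u v) > conf \<delta> (n' u v))"
  have pr: "\<forall>p\<in>set pp. (Rt!p = B!p \<and> Rt!(p+1) = B!(p+1)) \<or> (Rt!p = B!(p+1) \<and> Rt!(p+1) = B!p)"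
    using display_pairs[OF dB(3)] unfolding Rt_def pp_def by blast
  have loc: "\<exists>p\<in>set pp. B!p = x \<and> B!(p+1) = y" if xy: "(x,y) \<in> badp Q B" for x y
  proof -
    obtain p1 q1 where pq: "p1 < q1" "q1 < length B" "B!p1 = x" "B!q1 = y" "y < x"
      using xy unfolding badp_def invs_def by auto
    have Qyx: "Q y x" using xy unfolding badp_def by auto
    have old: "real_of_int (s y x) \<le> conf \<delta> (n y x)" using G xy unfolding badp_def by auto
    have "\<exists>p\<in>set pp. (y = Rt!p \<and> x = Rt!(p+1)) \<or> (y = Rt!(p+1) \<and> x = Rt!p)"
    proof (rule ccontr)
      assume "\<not> ?thesis"
      then have "s' y x = s y x \<and> n' y x = n y x"
        using stats_unchanged[OF _ us[unfolded Rt_def[symmetric]]] unfolding pp_def by blast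
      then show False using Qyx old unfolding Q_def by simp
    qed
    then obtain p where p: "p \<in> set pp" "(y = B!p \<and> x = B!(p+1)) \<or> (y = B!(p+1) \<and> x = B!p)"
      using pr by blast
    have pl: "p+1 < length B" using pp_bound p(1) dB(3) unfolding pp_def by blast
    have "\<not> (y = B!p \<and> x = B!(p+1))"
    proof
      assume a: "y = B!p \<and> x = B!(p+1)"
      then have "q1 = p" "p1 = p+1" using pq pl dB(1) by (auto simp: nth_eq_iff_index_eq)
      then show False using pq by simp
    qed
    then show ?thesis using p by blast
  qed
  have H: "\<not> Q u v" if "u \<in> set B" "v \<in> set B" "v < u" for u v
    using E2[of v u] that dB(2) unfolding Q_def by auto
  have A0: "\<exists>p. p+1 < length B \<and> B!p = x \<and> B!(p+1) = y" if "(x,y) \<in> badp Q B" for x y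
    using loc[OF that] pp_bound dB(3) unfolding pp_def by blast
  have D: "x = x' \<and> y = y'" if DD: "(x,y) \<in> badp Q B" "(x',y') \<in> badp Q B"
      "x=x' \<or> x=y' \<or> y=x' \<or> y=y'" for x y x' y'
  proof -
    obtain p where p: "p \<in> set pp" "B!p = x" "B!(p+1) = y" using loc[OF DD(1)] by blast
    obtain p' where p': "p' \<in> set pp" "B!p' = x'" "B!(p'+1) = y'" using loc[OF DD(2)] by blast
    have l: "p+1 < length B" "p'+1 < length B" using pp_bound p(1) p'(1) dB(3) unfolding pp_def by blast+
    have "p = p' \<or> p = p'+1 \<or> p+1 = p' \<or> p+1 = p'+1"
      using DD(3) p p' l dB(1) by (auto simp: nth_eq_iff_index_eq)
    then have "p = p'" using pp_gap[of p K h p'] p(1) p'(1) unfolding pp_def by auto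
    then show ?thesis using p p' by simp
  qed
  have upd: "update_list \<delta> K s' n' B =
      foldl (\<lambda>R p. if Q (R!(p+1)) (R!p) then swap_list R p (p+1) else R) B [0..<length B - 1]"
    unfolding update_list_def Q_def dB(3) by (rule refl)
  note PF = pass_fold[of B Q "length B - 1", OF dB(1) H D A0, unfolded upd[symmetric]]
  have C: "distinct (update_list \<delta> K s' n' B)" "set (update_list \<delta> K s' n' B) = set B"
    "\<forall>(x,y)\<in>badp Q (update_list \<delta> K s' n' B). \<exists>p\<ge>length B - 1. p+1 < length B"
    using PF by fastforce+
  have "(x,y) \<notin> badp Q (update_list \<delta> K s' n' B)" for x y
    using C(3) by fastforce
  then have "\<forall>(x,y)\<in>invs (update_list \<delta> K s' n' B). real_of_int (s' y x) \<le> conf \<delta> (n' y x)"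
    unfolding badp_def Q_def by force
  then show ?thesis using C(1,2) dB(2) unfolding lists_K_def by auto
qed

lemma inv_all:
  assumes R0: "R0 \<in> lists_K K" and E: "good_event \<delta> K R0 A X coin \<alpha> hor"
  shows "m \<le> hor \<Longrightarrow> snd (snd (bubble_state \<delta> K R0 A X coin m)) \<in> lists_K K \<and>
    (\<forall>(x,y)\<in>invs (snd (snd (bubble_state \<delta> K R0 A X coin m))).
       real_of_int (fst (bubble_state \<delta> K R0 A X coin m) y x) \<le> conf \<delta> (fst (snd (bubble_state \<delta> K R0 A X coin m)) y x))"
proof (induction m)
  case 0
  then show ?case using R0 by (simp add: conf_def)
next
  case (Suc m)
  obtain s n B where bs: "bubble_state \<delta> K R0 A X coin m = (s,n,B)" by (metis prod_cases3)
  define h where "h = Suc m mod 2"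
  define Rt where "Rt = display_list \<delta> K h s n (coin (Suc m)) B"
  obtain s' n' where us: "update_stats K h Rt (\<lambda>k. X (Suc m) Rt k * A (Suc m) (Rt ! k)) (s, n) = (s',n')"
    by (metis prod.exhaust)
  have bsS: "bubble_state \<delta> K R0 A X coin (Suc m) = (s', n', update_list \<delta> K s' n' B)"
    using us by (simp add: bs Let_def h_def Rt_def)
  have IH: "B \<in> lists_K K" "\<forall>(x,y)\<in>invs B. real_of_int (s y x) \<le> conf \<delta> (n y x)"
    using Suc bs by auto
  have E2: "real_of_int (s' i j) \<le> conf \<delta> (n' i j)" if "j < i" "i < K" for i j
  proof -
    have "Suc m \<in> {1..hor}" using Suc.prems by simp
    then have "real_of_int (stat_s \<delta> K R0 A X coin (Suc m) i j) \<le> conf \<delta> (stat_n \<delta> K R0 A X coin (Suc m) i j)"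
      using E that unfolding good_event_def by blast
    then show ?thesis using bsS unfolding stat_s_def stat_n_def by simp
  qed
  show ?case using inv_step[OF IH us[unfolded Rt_def] E2] bsS by simp
qed

lemma pos_of_nth: "distinct B \<Longrightarrow> q < length B \<Longrightarrow> pos_of B (B!q) = q"
  unfolding pos_of_def by (rule the_equality) (auto simp: nth_eq_iff_index_eq)

lemma pigeon:
  assumes B: "B \<in> lists_K K" and k: "k < K"
  shows "\<exists>p. k \<le> p \<and> p < K \<and> B!p \<le> k"
proof (rule ccontr)
  assume no: "\<not> ?thesis"
  have dB: "distinct B" "set B = {0..<K}" "length B = K" using lists_K_props[OF B] by auto
  have "{0..k} \<subseteq> (\<lambda>p. B!p) ` {0..<k}"
  proof
    fix i assume i: "i \<in> {0..k}"
    then have "i \<in> set B" using dB k by auto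
    then obtain p where p: "p < K" "B!p = i" using dB(3) by (metis in_set_conv_nth)
    have "p < k" using no p i by force
    then show "i \<in> (\<lambda>p. B!p) ` {0..<k}" using p by auto
  qed
  then have "card {0..k} \<le> card ((\<lambda>p. B!p) ` {0..<k})" by (intro card_mono) auto
  also have "\<dots> \<le> k" using card_image_le[of "{0..<k}" "\<lambda>p. B!p"] by simp
  finally show False by simp
qed

lemma regret_key:
  fixes \<alpha> :: "nat \<Rightarrow> real" and s :: "nat \<Rightarrow> nat \<Rightarrow> int" and n :: "nat \<Rightarrow> nat \<Rightarrow> nat"
  assumes B: "B \<in> lists_K K"
    and G: "\<forall>(x,y)\<in>invs B. real_of_int (s y x) \<le> conf \<delta> (n y x)"
    and adec: "\<And>i j. i < j \<Longrightarrow> j < K \<Longrightarrow> \<alpha> j < \<alpha> i"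
    and Pdef: "P = {(i,j). i < j \<and> j < K \<and> \<bar>int (pos_of B i) - int (pos_of B j)\<bar> = 1 \<and>
                  real_of_int (s i j) \<le> conf \<delta> (n i j)}"
    and W: "\<forall>p\<in>W. p+1 < K \<and> real_of_int (s (B!p) (B!(p+1))) \<le> conf \<delta> (n (B!p) (B!(p+1)))"
    and Rk: "\<forall>k<K. R ! k = (if k\<in>W then B!(k+1) else if k>0 \<and> k-1 \<in> W then B!(k-1) else B!k)"
    and k: "k < K"
  shows "\<alpha> k - \<alpha> (R!k) \<le> 2 * (\<Sum>z\<in>P. \<alpha> (fst z) - \<alpha> (snd z))"
proof -
  have dB: "distinct B" "set B = {0..<K}" "length B = K" using lists_K_props[OF B] by auto
  have Bl: "q < K \<Longrightarrow> B!q < K" for q using dB nth_mem by fastforce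
  let ?SP = "\<Sum>z\<in>P. \<alpha> (fst z) - \<alpha> (snd z)"
  have Psub: "P \<subseteq> {..<K} \<times> {..<K}" unfolding Pdef by auto
  have finP: "finite P" using finite_subset[OF Psub] by auto
  have Pnn: "z \<in> P \<Longrightarrow> 0 \<le> \<alpha> (fst z) - \<alpha> (snd z)" for z
    using adec unfolding Pdef by (auto simp: less_imp_le)
  have single: "z \<in> P \<Longrightarrow> \<alpha> (fst z) - \<alpha> (snd z) \<le> ?SP" for z
    using member_le_sum[of z P "\<lambda>z. \<alpha> (fst z) - \<alpha> (snd z)"] finP Pnn by auto
  have SPnn: "0 \<le> ?SP" using Pnn by (simp add: sum_nonneg)
  have adjP: "(B!(q+1), B!q) \<in> P" if q: "q+1 < K" "B!(q+1) < B!q" for q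
  proof -
    have "(B!q, B!(q+1)) \<in> invs B" unfolding invs_def using q dB by auto
    then have "real_of_int (s (B!(q+1)) (B!q)) \<le> conf \<delta> (n (B!(q+1)) (B!q))" using G by auto
    moreover have "pos_of B (B!q) = q" "pos_of B (B!(q+1)) = q+1" using pos_of_nth dB q by auto
    ultimately show ?thesis unfolding Pdef using q Bl by auto
  qed
  have WP: "(B!q, B!(q+1)) \<in> P" if q: "q \<in> W" "B!q < B!(q+1)" for q
  proof -
    have ql: "q+1 < K" using W q by auto
    have "pos_of B (B!q) = q" "pos_of B (B!(q+1)) = q+1" using pos_of_nth dB ql by auto
    then show ?thesis unfolding Pdef using q W ql Bl by auto
  qed
  define g where "g q = max 0 (\<alpha> (B!(q+1)) - \<alpha> (B!q))" for q
  define Qs where "Qs = {q. q < K - 1 \<and> B!(q+1) < B!q}"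
  have gQ: "g q = (if q \<in> Qs then \<alpha> (B!(q+1)) - \<alpha> (B!q) else 0)" if "q < K - 1" for q
  proof (cases "B!(q+1) < B!q")
    case True
    then have "\<alpha> (B!q) < \<alpha> (B!(q+1))" using adec Bl that by auto
    then show ?thesis using True that unfolding g_def Qs_def by auto
  next
    case False
    have "B!(q+1) \<noteq> B!q" using dB that by (auto simp: nth_eq_iff_index_eq)
    then have "B!q < B!(q+1)" using False by simp
    then have "\<alpha> (B!(q+1)) < \<alpha> (B!q)" using adec Bl that by auto
    then show ?thesis using False that unfolding g_def Qs_def by auto
  qed
  have Sadj: "(\<Sum>q<K-1. g q) \<le> ?SP"
  proof -
    have "(\<Sum>q<K-1. g q) = (\<Sum>q<K-1. if q \<in> Qs then \<alpha> (B!(q+1)) - \<alpha> (B!q) else 0)"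
      using gQ by (intro sum.cong) auto
    also have "\<dots> = (\<Sum>q\<in>{..<K-1} \<inter> Qs. \<alpha> (B!(q+1)) - \<alpha> (B!q))"
      by (rule sum.inter_restrict[symmetric]) auto
    also have "{..<K-1} \<inter> Qs = Qs" unfolding Qs_def by auto
    also have "(\<Sum>q\<in>Qs. \<alpha> (B!(q+1)) - \<alpha> (B!q)) = (\<Sum>z\<in>(\<lambda>q. (B!(q+1), B!q)) ` Qs. \<alpha> (fst z) - \<alpha> (snd z))"
    proof -
      have inj: "inj_on (\<lambda>q. (B!(q+1), B!q)) Qs"
        unfolding inj_on_def Qs_def using dB by (auto simp: nth_eq_iff_index_eq)
      show ?thesis using sum.reindex[OF inj, of "\<lambda>z. \<alpha> (fst z) - \<alpha> (snd z)"] by simp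
    qed
    also have "\<dots> \<le> ?SP"
    proof (rule sum_mono2[OF finP])
      show "(\<lambda>q. (B!(q+1), B!q)) ` Qs \<subseteq> P" using adjP unfolding Qs_def by auto
      show "\<And>z. z \<in> P - (\<lambda>q. (B!(q+1), B!q)) ` Qs \<Longrightarrow> 0 \<le> \<alpha> (fst z) - \<alpha> (snd z)"
        using Pnn by auto
    qed
    finally show ?thesis .
  qed
  have posB: "\<alpha> k' - \<alpha> (B!k') \<le> ?SP" if k': "k' < K" for k'
  proof -
    obtain p where p: "k' \<le> p" "p < K" "B!p \<le> k'" using pigeon[OF B k'] by blast
    have "\<alpha> k' \<le> \<alpha> (B!p)" using adec[of "B!p" k'] p k' by (cases "B!p = k'") auto
    moreover have "\<alpha> (B!p) - \<alpha> (B!k') = (\<Sum>q=k'..<p. \<alpha> (B!(Suc q)) - \<alpha> (B!q))"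
      using sum_Suc_diff'[OF p(1), of "\<lambda>q. \<alpha> (B!q)"] by simp
    moreover have "(\<Sum>q=k'..<p. \<alpha> (B!(Suc q)) - \<alpha> (B!q)) \<le> (\<Sum>q=k'..<p. g q)"
      unfolding g_def by (intro sum_mono) auto
    moreover have "(\<Sum>q=k'..<p. g q) \<le> (\<Sum>q<K-1. g q)"
      by (rule sum_mono2) (use p in \<open>auto simp: g_def\<close>)
    ultimately show ?thesis using Sadj by linarith
  qed
  show ?thesis
  proof (cases "k \<in> W")
    case True
    have R: "R!k = B!(k+1)" using Rk k True by auto
    have kl: "k+1 < K" using W True by auto
    have "\<alpha> (B!k) - \<alpha> (B!(k+1)) \<le> ?SP"
    proof (cases "B!k < B!(k+1)")
      case True2: True
      show ?thesis using single[OF WP[OF True True2]] by simp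
    next
      case False
      have "B!(k+1) \<noteq> B!k" using dB kl by (auto simp: nth_eq_iff_index_eq)
      then have "\<alpha> (B!k) \<le> \<alpha> (B!(k+1))" using False adec[of "B!(k+1)" "B!k"] Bl kl by auto
      then show ?thesis using SPnn by linarith
    qed
    then show ?thesis using posB[OF k] unfolding R by linarith
  next
    case False
    show ?thesis
    proof (cases "k > 0 \<and> k - 1 \<in> W")
      case True
      have R: "R!k = B!(k-1)" using Rk k True False by auto
      have "\<alpha> k \<le> \<alpha> (k-1)" using adec[of "k-1" k] k True by auto
      moreover have "k-1 < K" using k by simp
      ultimately show ?thesis using posB[of "k-1"] SPnn unfolding R by linarith
    next
      case False2: False
      have R: "R!k = B!k" using Rk k False False2 by auto
      then show ?thesis using posB[OF k] SPnn by auto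
    qed
  qed
qed

lemma fold_swap_perm:
  "\<forall>p\<in>set ps. p+1 < length B \<Longrightarrow>
   distinct (foldl (\<lambda>R p. if C R p then swap_list R p (p+1) else R) B ps) = distinct B \<and>
   set (foldl (\<lambda>R p. if C R p then swap_list R p (p+1) else R) B ps) = set B \<and>
   length (foldl (\<lambda>R p. if C R p then swap_list R p (p+1) else R) B ps) = length B"
proof (induction ps arbitrary: B)
  case Nil
  then show ?case by simp
next
  case (Cons p ps)
  define B' where "B' = (if C B p then swap_list B p (p+1) else B)"
  have pl: "p+1 < length B" using Cons.prems by simp
  have B': "distinct B' = distinct B" "set B' = set B" "length B' = length B"
    unfolding B'_def using swap_distinct[of p B "p+1"] swap_set[of p B "p+1"] pl by auto
  have "\<forall>p\<in>set ps. p+1 < length B'" using Cons.prems B'(3) by simp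
  from Cons.IH[OF this] show ?case using B' unfolding B'_def by simp
qed

lemma display_perm: "B \<in> lists_K K \<Longrightarrow> display_list \<delta> K h s n cn B \<in> lists_K K"
proof -
  assume B: "B \<in> lists_K K"
  have dB: "distinct B" "set B = {0..<K}" "length B = K" using lists_K_props[OF B] by auto
  have "\<forall>p\<in>set (pair_positions K h). p+1 < length B" using pp_bound dB(3) by auto
  from fold_swap_perm[OF this] show ?thesis using dB unfolding display_list_def lists_K_def by auto
qed

lemma opt_in: "opt_list K \<in> lists_K K"
  unfolding opt_list_def lists_K_def by simp

lemma SP_eq:
  fixes K :: nat
  assumes "P \<subseteq> {(i,j). i < j \<and> j < K}"
  shows "(\<Sum>i<K. \<Sum>j\<in>{i+1..<K}. (if (i, j) \<in> P then \<alpha> i - \<alpha> j else 0)) =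
         (\<Sum>z\<in>P. \<alpha> (fst z) - (\<alpha> (snd z) :: real))"
proof -
  have "(\<Sum>i<K. \<Sum>j\<in>{i+1..<K}. (if (i, j) \<in> P then \<alpha> i - \<alpha> j else 0)) =
        (\<Sum>(i,j)\<in>(SIGMA i:{..<K}. {i+1..<K}). (if (i, j) \<in> P then \<alpha> i - \<alpha> j else 0))"
    by (rule sum.Sigma) (auto simp del: lessThan_iff)
  also have "\<dots> = (\<Sum>z\<in>(SIGMA i:{..<K}. {i+1..<K}). (if z \<in> P then \<alpha> (fst z) - \<alpha> (snd z) else 0))"
    by (intro sum.cong) auto
  also have "\<dots> = (\<Sum>z\<in>(SIGMA i:{..<K}. {i+1..<K}) \<inter> P. \<alpha> (fst z) - \<alpha> (snd z))"
    by (rule sum.inter_restrict[symmetric]) auto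
  also have "(SIGMA i:{..<K}. {i+1..<K}) \<inter> P = P" using assms by auto
  finally show ?thesis .
qed

theorem lemma4:
  fixes K hor :: nat and \<delta> :: real
    and \<alpha> :: "nat \<Rightarrow> real" and \<chi> :: "nat list \<Rightarrow> nat \<Rightarrow> real"
    and R0 :: "nat list"
    and A :: "nat \<Rightarrow> nat \<Rightarrow> int" and X :: "nat \<Rightarrow> nat list \<Rightarrow> nat \<Rightarrow> int"
    and coin :: "nat \<Rightarrow> nat \<Rightarrow> bool"
  assumes delta: "0 < \<delta>" "\<delta> < 1"
    and R0: "R0 \<in> lists_K K"
    and A01: "\<And>t i. A t i \<in> {0, 1}"
    and X01: "\<And>t R k. X t R k \<in> {0, 1}"
    and alpha_range: "\<And>i. i < K \<Longrightarrow> 0 < \<alpha> i \<and> \<alpha> i \<le> 1"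
    and alpha_dec: "\<And>i j. i < j \<Longrightarrow> j < K \<Longrightarrow> \<alpha> j < \<alpha> i"
    and chi_range: "\<And>R k. R \<in> lists_K K \<Longrightarrow> k < K \<Longrightarrow> 0 \<le> \<chi> R k \<and> \<chi> R k \<le> 1"
    and A1: "\<And>R. R \<in> lists_K K \<Longrightarrow> reward K R \<alpha> \<chi> \<le> reward K (opt_list K) \<alpha> \<chi>"
    and A2: "\<And>R R' k. R \<in> lists_K K \<Longrightarrow> R' \<in> lists_K K \<Longrightarrow> k < K \<Longrightarrow>
               set (take k R) = set (take k R') \<Longrightarrow> \<chi> R k = \<chi> R' k"
    and A3: "\<And>R k l. R \<in> lists_K K \<Longrightarrow> k < l \<Longrightarrow> l < K \<Longrightarrow> \<chi> R l \<le> \<chi> R k"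
    and A4: "\<And>R k l. R \<in> lists_K K \<Longrightarrow> k < l \<Longrightarrow> l < K \<Longrightarrow>
               (\<alpha> (R ! k) \<le> \<alpha> (R ! l) \<longleftrightarrow> \<chi> (swap_list R k l) l \<le> \<chi> R l)"
    and A5: "\<And>R k. R \<in> lists_K K \<Longrightarrow> k < K \<Longrightarrow> \<chi> (opt_list K) k \<le> \<chi> R k"
    and E: "good_event \<delta> K R0 A X coin \<alpha> hor"
    and t: "t \<in> {1..hor}"
  shows "(\<Sum>k<K. \<chi> (opt_list K) k * \<alpha> k
              - \<chi> (shown_list \<delta> K R0 A X coin t) k * \<alpha> (shown_list \<delta> K R0 A X coin t ! k))
         \<le> 3 * real K * \<chi> (opt_list K) 0 *
            (\<Sum>i<K. \<Sum>j\<in>{i+1..<K}.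
               (if (i, j) \<in> P_set \<delta> K R0 A X coin t then \<alpha> i - \<alpha> j else 0))"
proof -
  define m where "m = t - 1"
  have mh: "m \<le> hor" using t unfolding m_def by auto
  have tm: "t = Suc m" using t unfolding m_def by auto
  define s where "s = stat_s \<delta> K R0 A X coin m"
  define n where "n = stat_n \<delta> K R0 A X coin m"
  define B where "B = bar_list \<delta> K R0 A X coin t"
  define R where "R = shown_list \<delta> K R0 A X coin t"
  have inv: "B \<in> lists_K K" "\<forall>(x,y)\<in>invs B. real_of_int (s y x) \<le> conf \<delta> (n y x)"
    using inv_all[OF R0 E mh] unfolding B_def s_def n_def bar_list_def stat_s_def stat_n_def tm
    by auto
  have dB: "distinct B" "set B = {0..<K}" "length B = K" using lists_K_props[OF inv(1)] by auto
  have Rdef: "R = display_list \<delta> K (t mod 2) s n (coin t) B"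
    unfolding R_def shown_list_def s_def n_def B_def m_def ..
  have RK: "R \<in> lists_K K" unfolding Rdef by (rule display_perm[OF inv(1)])
  have RdR: "set R = {0..<K}" "length R = K" using lists_K_props[OF RK] by auto
  obtain W where W: "W \<subseteq> set (pair_positions K (t mod 2))"
     "\<forall>p\<in>W. real_of_int (s (B!p) (B!(p+1))) \<le> conf \<delta> (n (B!p) (B!(p+1)))"
     "\<forall>k<length B. R ! k = (if k\<in>W then B!(k+1) else if k>0 \<and> k-1 \<in> W then B!(k-1) else B!k)"
    using display_char[OF dB(3), of "t mod 2" s \<delta> n "coin t"] unfolding Rdef[symmetric] by blast
  have W': "\<forall>p\<in>W. p+1 < K \<and> real_of_int (s (B!p) (B!(p+1))) \<le> conf \<delta> (n (B!p) (B!(p+1)))"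
    using W(1,2) pp_bound by blast
  define P where "P = P_set \<delta> K R0 A X coin t"
  have Pdef: "P = {(i,j). i < j \<and> j < K \<and> \<bar>int (pos_of B i) - int (pos_of B j)\<bar> = 1 \<and>
                  real_of_int (s i j) \<le> conf \<delta> (n i j)}"
    unfolding P_def P_set_def B_def s_def n_def m_def Let_def ..
  define SP where "SP = (\<Sum>z\<in>P. \<alpha> (fst z) - \<alpha> (snd z))"
  have key: "\<alpha> k - \<alpha> (R!k) \<le> 2 * SP" if "k < K" for k
    unfolding SP_def
    by (rule regret_key[OF inv(1) inv(2) alpha_dec Pdef W']) (use W(3) dB(3) that in auto)
  have Psub: "P \<subseteq> {(i,j). i < j \<and> j < K}" unfolding Pdef by auto
  have RHS: "(\<Sum>i<K. \<Sum>j\<in>{i+1..<K}. (if (i, j) \<in> P_set \<delta> K R0 A X coin t then \<alpha> i - \<alpha> j else 0)) = SP"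
    using SP_eq[OF Psub, of \<alpha>] unfolding SP_def P_def by simp
  have SPnn: "0 \<le> SP" unfolding SP_def
    by (rule sum_nonneg) (use Psub alpha_dec in \<open>force simp: less_imp_le\<close>)
  define cm where "cm = \<chi> (opt_list K) 0"
  have tmb: "\<chi> (opt_list K) k * \<alpha> k - \<chi> R k * \<alpha> (R ! k) \<le> cm * (2 * SP)" if k: "k < K" for k
  proof -
    have Rk: "R!k < K" using RdR k by (metis atLeastLessThan_iff nth_mem)
    have c0: "0 \<le> \<chi> (opt_list K) k" "\<chi> (opt_list K) k \<le> cm"
      using chi_range[OF opt_in k] A3[OF opt_in, of 0 k] k unfolding cm_def
      by (cases "k = 0"; auto)+
    have "\<chi> (opt_list K) k \<le> \<chi> R k" using A5[OF RK k] .
    moreover have "0 < \<alpha> (R!k)" using alpha_range[OF Rk] by simp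
    ultimately have "\<chi> (opt_list K) k * \<alpha> (R!k) \<le> \<chi> R k * \<alpha> (R ! k)"
      by (simp add: mult_right_mono)
    moreover have "\<chi> (opt_list K) k * (\<alpha> k - \<alpha> (R!k)) \<le> \<chi> (opt_list K) k * (2 * SP)"
      using key[OF k] c0(1) by (rule mult_left_mono)
    moreover have "\<chi> (opt_list K) k * (2 * SP) \<le> cm * (2 * SP)"
      using c0(2) SPnn by (simp add: mult_right_mono)
    ultimately show ?thesis by (simp add: algebra_simps)
  qed
  have cmnn: "0 \<le> cm" if "0 < K"
    using chi_range[OF opt_in that] unfolding cm_def by simp
  have "(\<Sum>k<K. \<chi> (opt_list K) k * \<alpha> k - \<chi> R k * \<alpha> (R ! k)) \<le> (\<Sum>k<K. cm * (2 * SP))"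
    using tmb by (intro sum_mono) auto
  also have "\<dots> = real K * cm * (2 * SP)" by simp
  also have "\<dots> \<le> 3 * real K * cm * SP"
  proof (cases "K = 0")
    case True then show ?thesis by simp
  next
    case False
    then have "0 \<le> real K * cm * SP" using cmnn SPnn by simp
    then show ?thesis by (simp add: algebra_simps)
  qed
  finally show ?thesis unfolding RHS R_def cm_def .
qed

end
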